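(* Let $T$ be a non-meagre subset with the Baire property of a metric space $X$, and let $G$ be a normed group, Baire in its norm topology, acting separately continuously and transitively on $X$ with the Nikodym property. Then for every convergent sequence $x_n\to x_0$ in $X$ there exist $\tau\in G$ and an integer $N$ such that $\tau x_0\in T$ and \[\{\tau(x_n):n>N\}\subseteq T.\]
   Context: A normed group is a group with a group-norm $\|\cdot\|$ (subadditive, $\|t\|>0$ for $t\ne e_G$, $\|e_G\|=0$, $\|t^{-1}\|=\|t\|$); its norm topology is that of $d_R(s,t)=\|st^{-1}\|$. A separately continuous action $\varphi:G\times X\to X$ ($\varphi(e_G,x)=x$, $\varphi(gh,x)=\varphi(g,\varphi(h,x))$, write $gx=g(x)=\varphi(g,x)$) has $x\mapsto g(x)$ continuous for each $g$ and $g\mapsto g(x)$ continuous for each $x$; transitive means for all $x,y$ some $g$ has $g(x)=y$. Nikodym property: for every non-empty open neighbourhood $U$ of $e_G$ and every $x$, $Ux=\{u(x):u\in U\}$ contains a non-meagre set with the Baire property. *)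

theory Defs
  imports "HOL-Analysis.Analysis" "HOL-Algebra.Group"
begin

definition nowhere_dense_in :: "'a topology \<Rightarrow> 'a set \<Rightarrow> bool" where
  "nowhere_dense_in X A \<longleftrightarrow> A \<subseteq> topspace X \<and> X interior_of (X closure_of A) = {}"

definition meagre_in :: "'a topology \<Rightarrow> 'a set \<Rightarrow> bool" where
  "meagre_in X A \<longleftrightarrow> A \<subseteq> topspace X \<and>
     (\<exists>F :: nat \<Rightarrow> 'a set. (\<forall>n. nowhere_dense_in X (F n)) \<and> A \<subseteq> (\<Union>n. F n))"

definition baire_property_in :: "'a topology \<Rightarrow> 'a set \<Rightarrow> bool" where
  "baire_property_in X A \<longleftrightarrow> A \<subseteq> topspace X \<and>
     (\<exists>U. openin X U \<and> meagre_in X ((A - U) \<union> (U - A)))"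

definition Baire_space :: "'a topology \<Rightarrow> bool" where
  "Baire_space X \<longleftrightarrow> (\<forall>U. openin X U \<and> U \<noteq> {} \<longrightarrow> \<not> meagre_in X U)"

definition group_norm :: "('g, 'b) monoid_scheme \<Rightarrow> ('g \<Rightarrow> real) \<Rightarrow> bool" where
  "group_norm G nm \<longleftrightarrow>
     (\<forall>s\<in>carrier G. \<forall>t\<in>carrier G. nm (s \<otimes>\<^bsub>G\<^esub> t) \<le> nm s + nm t) \<and>
     (\<forall>t\<in>carrier G. t \<noteq> \<one>\<^bsub>G\<^esub> \<longrightarrow> nm t > 0) \<and>
     nm \<one>\<^bsub>G\<^esub> = 0 \<and>
     (\<forall>t\<in>carrier G. nm (inv\<^bsub>G\<^esub> t) = nm t)"

text \<open>Norm topology: the topology of the right metric d_R(s,t) = nm (s t^{-1}) on carrier G.\<close>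
definition norm_topology :: "('g, 'b) monoid_scheme \<Rightarrow> ('g \<Rightarrow> real) \<Rightarrow> 'g topology" where
  "norm_topology G nm = topology (\<lambda>U. U \<subseteq> carrier G \<and>
     (\<forall>u\<in>U. \<exists>e>0. \<forall>v\<in>carrier G. nm (v \<otimes>\<^bsub>G\<^esub> inv\<^bsub>G\<^esub> u) < e \<longrightarrow> v \<in> U))"

definition sep_cont_action ::
    "('g, 'b) monoid_scheme \<Rightarrow> ('g \<Rightarrow> real) \<Rightarrow> ('g \<Rightarrow> 'x::topological_space \<Rightarrow> 'x) \<Rightarrow> bool" where
  "sep_cont_action G nm \<phi> \<longleftrightarrow>
     (\<forall>x. \<phi> \<one>\<^bsub>G\<^esub> x = x) \<and>
     (\<forall>g\<in>carrier G. \<forall>h\<in>carrier G. \<forall>x. \<phi> (g \<otimes>\<^bsub>G\<^esub> h) x = \<phi> g (\<phi> h x)) \<and>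
     (\<forall>g\<in>carrier G. continuous_on UNIV (\<phi> g)) \<and>
     (\<forall>x. continuous_map (norm_topology G nm) euclidean (\<lambda>g. \<phi> g x))"

definition transitive_action :: "('g, 'b) monoid_scheme \<Rightarrow> ('g \<Rightarrow> 'x \<Rightarrow> 'x) \<Rightarrow> bool" where
  "transitive_action G \<phi> \<longleftrightarrow> (\<forall>x y. \<exists>g\<in>carrier G. \<phi> g x = y)"

definition nikodym_property ::
    "('g, 'b) monoid_scheme \<Rightarrow> ('g \<Rightarrow> real) \<Rightarrow> ('g \<Rightarrow> 'x::topological_space \<Rightarrow> 'x) \<Rightarrow> bool" where
  "nikodym_property G nm \<phi> \<longleftrightarrow>
     (\<forall>U x. openin (norm_topology G nm) U \<and> \<one>\<^bsub>G\<^esub> \<in> U \<longrightarrow>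
        (\<exists>S. S \<subseteq> (\<lambda>u. \<phi> u x) ` U \<and> \<not> meagre_in euclidean S \<and> baire_property_in euclidean S))"

end

theory Submission
  imports Defs
begin
lemma istop_gen:
  fixes d :: "'g \<Rightarrow> 'g \<Rightarrow> real"
  shows "istopology (\<lambda>U. U \<subseteq> C \<and> (\<forall>u\<in>U. \<exists>e>0. \<forall>v\<in>C. d v u < e \<longrightarrow> v \<in> U))"
proof -
  have A: "S \<inter> T \<subseteq> C \<and> (\<forall>u\<in>S \<inter> T. \<exists>e>0. \<forall>v\<in>C. d v u < e \<longrightarrow> v \<in> S \<inter> T)"
    if S: "S \<subseteq> C \<and> (\<forall>u\<in>S. \<exists>e>0. \<forall>v\<in>C. d v u < e \<longrightarrow> v \<in> S)"
    and T: "T \<subseteq> C \<and> (\<forall>u\<in>T. \<exists>e>0. \<forall>v\<in>C. d v u < e \<longrightarrow> v \<in> T)" for S T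
  proof (intro conjI ballI)
    show "S \<inter> T \<subseteq> C" using S by blast
    fix u assume "u \<in> S \<inter> T"
    then obtain e1 e2 where "e1 > 0" "\<forall>v\<in>C. d v u < e1 \<longrightarrow> v \<in> S"
      "e2 > 0" "\<forall>v\<in>C. d v u < e2 \<longrightarrow> v \<in> T"
      using S T by blast
    note h = this
    show "\<exists>e>0. \<forall>v\<in>C. d v u < e \<longrightarrow> v \<in> S \<inter> T"
    proof (intro exI conjI ballI impI)
      show "0 < min e1 e2" using h(1,3) by simp
      fix v assume "v \<in> C" "d v u < min e1 e2"
      then show "v \<in> S \<inter> T" using h(2,4) by simp
    qed
  qed
  have B: "\<Union>K \<subseteq> C \<and> (\<forall>u\<in>\<Union>K. \<exists>e>0. \<forall>v\<in>C. d v u < e \<longrightarrow> v \<in> \<Union>K)"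
    if K: "\<forall>S\<in>K. S \<subseteq> C \<and> (\<forall>u\<in>S. \<exists>e>0. \<forall>v\<in>C. d v u < e \<longrightarrow> v \<in> S)" for K
  proof (intro conjI ballI)
    show "\<Union>K \<subseteq> C" using K by (simp add: Union_least)
    fix u assume "u \<in> \<Union>K"
    then obtain S where S: "S \<in> K" "u \<in> S" by (rule UnionE)
    then obtain e where e: "e > 0" "\<forall>v\<in>C. d v u < e \<longrightarrow> v \<in> S" using K by meson
    show "\<exists>e>0. \<forall>v\<in>C. d v u < e \<longrightarrow> v \<in> \<Union>K"
      using e S(1) by auto
  qed
  show ?thesis unfolding istopology_def
    apply (rule conjI)
     apply (intro allI impI)
     apply (erule (1) A)
    apply (intro allI impI)
    apply (erule B)
    done
qed

lemma openin_norm: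
  fixes nm :: "'g \<Rightarrow> real"
  shows "openin (norm_topology G nm) U \<longleftrightarrow> U \<subseteq> carrier G \<and>
     (\<forall>u\<in>U. \<exists>e>0. \<forall>v\<in>carrier G. nm (v \<otimes>\<^bsub>G\<^esub> inv\<^bsub>G\<^esub> u) < e \<longrightarrow> v \<in> U)"
  unfolding norm_topology_def
  using topology_inverse'[OF istop_gen[of "carrier G" "\<lambda>v u. nm (v \<otimes>\<^bsub>G\<^esub> inv\<^bsub>G\<^esub> u)"]]
  by simp

lemma topspace_norm:
  fixes nm :: "'g \<Rightarrow> real"
  shows "topspace (norm_topology G nm) = carrier G"
proof -
  have "openin (norm_topology G nm) (carrier G)" unfolding openin_norm
    by (intro conjI ballI subset_refl exI[of _ 1]) auto
  then have "carrier G \<subseteq> topspace (norm_topology G nm)" by (rule openin_subset)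
  moreover have "topspace (norm_topology G nm) \<subseteq> carrier G"
    using openin_topspace[of "norm_topology G nm"] unfolding openin_norm by (rule conjunct1)
  ultimately show ?thesis by (rule subset_antisym[rotated])
qed

lemma translate_open:
  fixes G (structure) and nm :: "'g \<Rightarrow> real"
  assumes "group G" "openin (norm_topology G nm) W" "g0 \<in> carrier G"
  shows "openin (norm_topology G nm) {u\<in>carrier G. u \<otimes> g0 \<in> W}"
proof -
  interpret group G by fact
  show ?thesis unfolding openin_norm
  proof (intro conjI ballI)
    show "{u \<in> carrier G. u \<otimes> g0 \<in> W} \<subseteq> carrier G" by (rule Collect_subset)
    fix u assume u: "u \<in> {u \<in> carrier G. u \<otimes> g0 \<in> W}"
    then have uc: "u \<in> carrier G" and uW: "u \<otimes> g0 \<in> W" by simp_all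
    obtain e where e: "e > 0" "\<forall>v\<in>carrier G. nm (v \<otimes> inv (u \<otimes> g0)) < e \<longrightarrow> v \<in> W"
      using uW assms(2) unfolding openin_norm by meson
    show "\<exists>e>0. \<forall>v\<in>carrier G. nm (v \<otimes> inv u) < e \<longrightarrow> v \<in> {u \<in> carrier G. u \<otimes> g0 \<in> W}"
    proof (intro exI[of _ e] conjI ballI impI)
      show "e > 0" by (rule e(1))
      fix v assume v: "v \<in> carrier G" "nm (v \<otimes> inv u) < e"
      have gg: "g0 \<otimes> (inv g0 \<otimes> inv u) = inv u" using uc assms(3) by (simp add: m_assoc[symmetric])
      have "v \<otimes> g0 \<otimes> inv (u \<otimes> g0) = v \<otimes> (g0 \<otimes> inv g0) \<otimes> inv u"
        using v uc assms(3) gg by (simp add: inv_mult_group m_assoc)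
      also have "\<dots> = v \<otimes> inv u" using v assms(3) by simp
      finally have "nm (v \<otimes> g0 \<otimes> inv (u \<otimes> g0)) < e" using v by simp
      then have "v \<otimes> g0 \<in> W" using e(2) v(1) assms(3) by simp
      then show "v \<in> {u \<in> carrier G. u \<otimes> g0 \<in> W}" using v(1) by simp
    qed
  qed
qed

lemma nd_meagre: "nowhere_dense_in X F \<Longrightarrow> meagre_in X F"
  unfolding meagre_in_def nowhere_dense_in_def
  by (intro conjI exI[of _ "\<lambda>_. F"]) (auto simp: nowhere_dense_in_def)

lemma nd_closure: "nowhere_dense_in X F \<Longrightarrow> nowhere_dense_in X (X closure_of F)"
  unfolding nowhere_dense_in_def by (simp add: closure_of_subset_topspace)


lemma preimage_nd:
  fixes G :: "('g, 'b) monoid_scheme" and nm :: "'g \<Rightarrow> real"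
    and \<phi> :: "'g \<Rightarrow> 'x::metric_space \<Rightarrow> 'x"
  assumes grp: "group G" and act: "sep_cont_action G nm \<phi>" and nik: "nikodym_property G nm \<phi>"
    and F: "nowhere_dense_in euclidean F"
  shows "nowhere_dense_in (norm_topology G nm) {g\<in>carrier G. \<phi> g p \<in> euclidean closure_of F}"
proof -
  let ?X = "norm_topology G nm"
  let ?C = "euclidean closure_of F"
  let ?B = "{g\<in>carrier G. \<phi> g p \<in> ?C}"
  have cm: "continuous_map ?X euclidean (\<lambda>g. \<phi> g p)" using act unfolding sep_cont_action_def by blast
  have cl: "closedin ?X ?B"
    using closedin_continuous_map_preimage[OF cm closedin_closure_of[of euclidean F]]
    unfolding topspace_norm .
  have Cmea: "meagre_in euclidean ?C" by (rule nd_meagre[OF nd_closure[OF F]])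
  have "?X interior_of ?B = {}"
    unfolding interior_of_eq_empty
  proof (intro allI impI)
    fix W assume W: "openin ?X W \<and> W \<subseteq> ?B"
    show "W = {}"
    proof (rule ccontr)
      assume "W \<noteq> {}"
      then obtain g0 where g0: "g0 \<in> W" by blast
      have g0c: "g0 \<in> carrier G" using g0 W by blast
      let ?U = "{u\<in>carrier G. u \<otimes>\<^bsub>G\<^esub> g0 \<in> W}"
      have Uo: "openin ?X ?U" using translate_open[OF grp _ g0c] W by blast
      have "\<one>\<^bsub>G\<^esub> \<otimes>\<^bsub>G\<^esub> g0 = g0" using grp g0c by (simp add: group.is_monoid)
      then have U1: "\<one>\<^bsub>G\<^esub> \<in> ?U" using g0 grp by (simp add: group.is_monoid)
      obtain S where S: "S \<subseteq> (\<lambda>u. \<phi> u (\<phi> g0 p)) ` ?U" "\<not> meagre_in euclidean S"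
        using nik Uo U1 unfolding nikodym_property_def by blast
      have "(\<lambda>u. \<phi> u (\<phi> g0 p)) ` ?U \<subseteq> ?C"
      proof
        fix z assume "z \<in> (\<lambda>u. \<phi> u (\<phi> g0 p)) ` ?U"
        then obtain u where u: "u \<in> carrier G" "u \<otimes>\<^bsub>G\<^esub> g0 \<in> W" and z: "z = \<phi> u (\<phi> g0 p)" by blast
        have "z = \<phi> (u \<otimes>\<^bsub>G\<^esub> g0) p" using act u(1) g0c z unfolding sep_cont_action_def by simp
        moreover have "u \<otimes>\<^bsub>G\<^esub> g0 \<in> ?B" using u(2) W by blast
        ultimately show "z \<in> ?C" by simp
      qed
      then have "S \<subseteq> ?C" using S(1) by (rule subset_trans[rotated])
      then have "meagre_in euclidean S" using Cmea unfolding meagre_in_def by blast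
      then show False using S(2) by contradiction
    qed
  qed
  then show ?thesis unfolding nowhere_dense_in_def closure_of_closedin[OF cl] topspace_norm by simp
qed


theorem proposition3:
  fixes G :: "('g, 'b) monoid_scheme" and nm :: "'g \<Rightarrow> real"
    and \<phi> :: "'g \<Rightarrow> 'x::metric_space \<Rightarrow> 'x" and T :: "'x set"
  assumes "group G" and "group_norm G nm"
    and "Baire_space (norm_topology G nm)"
    and "sep_cont_action G nm \<phi>" and "transitive_action G \<phi>"
    and "nikodym_property G nm \<phi>"
    and "\<not> meagre_in euclidean T" and "baire_property_in euclidean T"
  shows "\<forall>(x :: nat \<Rightarrow> 'x) x0. x \<longlonglongrightarrow> x0 \<longrightarrow>
           (\<exists>\<tau>\<in>carrier G. \<exists>N::nat. \<phi> \<tau> x0 \<in> T \<and> (\<forall>n>N. \<phi> \<tau> (x n) \<in> T))"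
proof (intro allI impI)
  fix x :: "nat \<Rightarrow> 'x" and x0 assume lim: "x \<longlonglongrightarrow> x0"
  let ?X = "norm_topology G nm"
  note grp = assms(1) and baire = assms(3) and act = assms(4) and tr = assms(5) and nik = assms(6)
  obtain U where Uo: "openin euclidean U" and Um: "meagre_in euclidean ((T - U) \<union> (U - T))"
    using assms(8) unfolding baire_property_in_def by blast
  obtain F :: "nat \<Rightarrow> 'x set" where Fnd: "\<And>k. nowhere_dense_in euclidean (F k)"
    and Fcov: "(T - U) \<union> (U - T) \<subseteq> (\<Union>k. F k)"
    using Um unfolding meagre_in_def by blast
  have "U \<noteq> {}"
  proof
    assume "U = {}"
    then have "T \<subseteq> (\<Union>k. F k)" using Fcov by blast
    then have "meagre_in euclidean T" unfolding meagre_in_def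
      by (intro conjI exI[of _ F]) (simp_all add: Fnd)
    then show False using assms(7) by contradiction
  qed
  then obtain y where yU: "y \<in> U" by blast
  obtain g1 where g1: "g1 \<in> carrier G" "\<phi> g1 x0 = y" using tr unfolding transitive_action_def by blast
  define pt where "pt = case_nat x0 x"
  define Bad where "Bad j = {g\<in>carrier G. \<phi> g (pt (fst (prod_decode j))) \<in> euclidean closure_of F (snd (prod_decode j))}" for j
  have Bnd: "nowhere_dense_in ?X (Bad j)" for j
    unfolding Bad_def by (rule preimage_nd[OF grp act nik Fnd])
  define A where "A = {g\<in>carrier G. \<phi> g x0 \<in> U}"
  have cm: "continuous_map ?X euclidean (\<lambda>g. \<phi> g x0)" using act unfolding sep_cont_action_def by blast
  have Ao: "openin ?X A"
    using openin_continuous_map_preimage[OF cm Uo] unfolding topspace_norm A_def .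
  have "g1 \<in> A" unfolding A_def using g1 yU by simp
  then have "A \<noteq> {}" by blast
  then have Anm: "\<not> meagre_in ?X A" using baire Ao unfolding Baire_space_def by blast
  have "\<not> A \<subseteq> (\<Union>j. Bad j)"
  proof
    assume "A \<subseteq> (\<Union>j. Bad j)"
    moreover have "A \<subseteq> topspace ?X" using Ao by (rule openin_subset)
    ultimately have "meagre_in ?X A" unfolding meagre_in_def
      by (intro conjI exI[of _ Bad]) (simp_all add: Bnd)
    then show False using Anm by contradiction
  qed
  then obtain \<tau> where tA: "\<tau> \<in> A" and tB: "\<And>j. \<tau> \<notin> Bad j" by blast
  have tc: "\<tau> \<in> carrier G" using tA unfolding A_def by simp
  have notbad: "\<phi> \<tau> (pt n) \<notin> U - T" for n
  proof
    assume in1: "\<phi> \<tau> (pt n) \<in> U - T"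
    then obtain k where k: "\<phi> \<tau> (pt n) \<in> F k" using Fcov by blast
    have "F k \<subseteq> euclidean closure_of F k" by (rule closure_of_subset) simp
    then have "\<tau> \<in> Bad (prod_encode (n, k))" unfolding Bad_def using tc k by auto
    then show False using tB by blast
  qed
  have t0U: "\<phi> \<tau> x0 \<in> U" using tA unfolding A_def by simp
  have t0T: "\<phi> \<tau> x0 \<in> T" using notbad[of 0] t0U unfolding pt_def by simp
  have "continuous_on UNIV (\<phi> \<tau>)" using act tc unfolding sep_cont_action_def by blast
  then have "isCont (\<phi> \<tau>) x0" using continuous_on_eq_continuous_at[of UNIV "\<phi> \<tau>"] by simp
  then have "(\<lambda>n. \<phi> \<tau> (x n)) \<longlonglongrightarrow> \<phi> \<tau> x0"
    using lim by (rule isCont_tendsto_compose)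
  moreover have "open U" using Uo by simp
  ultimately have "eventually (\<lambda>n. \<phi> \<tau> (x n) \<in> U) sequentially"
    using t0U by (rule topological_tendstoD)
  then obtain N where N: "\<And>n. n \<ge> N \<Longrightarrow> \<phi> \<tau> (x n) \<in> U" unfolding eventually_sequentially by blast
  have "\<forall>n>N. \<phi> \<tau> (x n) \<in> T"
  proof (intro allI impI)
    fix n assume "n > N"
    then have "\<phi> \<tau> (x n) \<in> U" using N by simp
    moreover have "\<phi> \<tau> (pt (Suc n)) \<notin> U - T" by (rule notbad)
    ultimately show "\<phi> \<tau> (x n) \<in> T" unfolding pt_def by simp
  qed
  then show "\<exists>\<tau>\<in>carrier G. \<exists>N::nat. \<phi> \<tau> x0 \<in> T \<and> (\<forall>n>N. \<phi> \<tau> (x n) \<in> T)"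
    using tc t0T by blast
qed

end
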